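(* Let $u$ be a one-sided Sturmian sequence and $(X_u^+,\sigma)$ its associated Sturmian system. In the HB diagram of $X_u^+$, for every $n\ge1$ there are exactly $n+1$ paths of length $n$ starting from either the vertex $0$ or the vertex $1$.
   Context: A sequence $u\in\{0,1\}^{\mathbb N}$ is Sturmian if for every $n\ge1$ exactly $n+1$ distinct blocks of length $n$ occur in $u$. $X_u^+$ is the closure of $\{\sigma^n u:n\in\mathbb N\}$, $\sigma$ the shift $(\sigma x)_i=x_{i+1}$, and $\tilde X_u=\{x\in\{0,1\}^{\mathbb Z}: x_px_{p+1}\dots\in X_u^+\ \forall p\}$ its natural extension. For a block $a_{-n}\dots a_0$ occurring in $\tilde X_u$, $\mathrm{fol}(a_{-n}\dots a_0)=\{b_0b_1\dots\in X_u^+:\exists b\in\tilde X_u,\ b_{-n}\dots b_0=a_{-n}\dots a_0\}$. A block $a_{-n}\dots a_0$ ($n\ge1$) is significant if $\mathrm{fol}(a_{-n}\dots a_0)\subsetneq\mathrm{fol}(a_{-n+1}\dots a_0)$; the blocks $0$ and $1$ are also significant. $\mathrm{sig}(\cdot)$ is the longest significant suffix. The HB diagram has vertex set the significant blocks and an arrow $\alpha\to\beta$ iff there is a symbol $b$ with $\alpha b$ occurring in $\tilde X_u$ and $\beta=\mathrm{sig}(\alpha b)$. The length of a path is its number of vertices. *)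

theory Defs
  imports Main
begin

text \<open>Sequences over the alphabet {0,1} are modelled as nat \<Rightarrow> nat (one-sided)
  and int \<Rightarrow> nat (two-sided). Blocks are lists; a block a_{-n}...a_0 is the list
  [a_{-n}, ..., a_0].\<close>

definition blocks_of :: "(nat \<Rightarrow> nat) \<Rightarrow> nat \<Rightarrow> nat list set" where
  "blocks_of u n = {map (\<lambda>i. u (m + i)) [0..<n] | m. True}"

definition sturmian :: "(nat \<Rightarrow> nat) \<Rightarrow> bool" where
  "sturmian u \<longleftrightarrow> (\<forall>i. u i \<in> {0, 1}) \<and> (\<forall>n\<ge>1. card (blocks_of u n) = n + 1)"

text \<open>Closure of the orbit of u in the product topology on {0,1}^N (cylinder sets
  form a basis): x is in the closure iff every neighbourhood [x_0..x_{n-1}] meets the orbit.\<close>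
definition Xplus :: "(nat \<Rightarrow> nat) \<Rightarrow> (nat \<Rightarrow> nat) set" where
  "Xplus u = {x. \<forall>n. \<exists>m. \<forall>i<n. x i = u (m + i)}"

definition Xtilde :: "(nat \<Rightarrow> nat) \<Rightarrow> (int \<Rightarrow> nat) set" where
  "Xtilde u = {x. \<forall>p::int. (\<lambda>i::nat. x (p + int i)) \<in> Xplus u}"

text \<open>ends_with b a: b_{-n}...b_0 = a_{-n}...a_0 where length a = n+1.\<close>
definition ends_with :: "(int \<Rightarrow> nat) \<Rightarrow> nat list \<Rightarrow> bool" where
  "ends_with b a \<longleftrightarrow> (\<forall>i<length a. b (int i - int (length a) + 1) = a ! i)"

definition occurs :: "(nat \<Rightarrow> nat) \<Rightarrow> nat list \<Rightarrow> bool" where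
  "occurs u a \<longleftrightarrow> (\<exists>b\<in>Xtilde u. ends_with b a)"

definition fol :: "(nat \<Rightarrow> nat) \<Rightarrow> nat list \<Rightarrow> (nat \<Rightarrow> nat) set" where
  "fol u a = (\<lambda>b. \<lambda>i::nat. b (int i)) ` {b \<in> Xtilde u. ends_with b a}"

definition significant :: "(nat \<Rightarrow> nat) \<Rightarrow> nat list \<Rightarrow> bool" where
  "significant u a \<longleftrightarrow> occurs u a \<and>
     (a = [0] \<or> a = [1] \<or> (length a \<ge> 2 \<and> fol u a \<subset> fol u (tl a)))"

text \<open>Longest significant suffix (suffixes are nonempty; drop k removes the k oldest symbols).\<close>
definition sig :: "(nat \<Rightarrow> nat) \<Rightarrow> nat list \<Rightarrow> nat list" where
  "sig u a = drop (LEAST k. k < length a \<and> significant u (drop k a)) a"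

definition hb_arrow :: "(nat \<Rightarrow> nat) \<Rightarrow> nat list \<Rightarrow> nat list \<Rightarrow> bool" where
  "hb_arrow u \<alpha> \<beta> \<longleftrightarrow> significant u \<alpha> \<and> significant u \<beta> \<and>
     (\<exists>c. occurs u (\<alpha> @ [c]) \<and> \<beta> = sig u (\<alpha> @ [c]))"

text \<open>A path is a list of vertices; its length is its number of vertices.\<close>
definition hb_path :: "(nat \<Rightarrow> nat) \<Rightarrow> nat list list \<Rightarrow> bool" where
  "hb_path u p \<longleftrightarrow> p \<noteq> [] \<and> (\<forall>v\<in>set p. significant u v) \<and>
     (\<forall>i. Suc i < length p \<longrightarrow> hb_arrow u (p ! i) (p ! Suc i))"

end

theory Submission
  imports Defs
begin


definition win :: "(nat \<Rightarrow> nat) \<Rightarrow> nat \<Rightarrow> nat \<Rightarrow> nat list" where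
  "win s m n = map (\<lambda>i. s (m + i)) [0..<n]"

lemma blocks_win: "blocks_of s n = range (\<lambda>m. win s m n)"
  unfolding blocks_of_def win_def by auto

lemma win_length[simp]: "length (win s m n) = n" by (simp add: win_def)
lemma win_nth[simp]: "i < n \<Longrightarrow> win s m n ! i = s (m + i)" by (simp add: win_def)
lemma win_eq_iff: "win s i n = win s j n \<longleftrightarrow> (\<forall>t<n. s (i+t) = s (j+t))"
  by (auto simp: list_eq_iff_nth_eq)
lemma take_win: "k \<le> n \<Longrightarrow> take k (win s m n) = win s m k"
  by (simp add: win_def take_map)
lemma win_Suc: "win s m (Suc n) = win s m n @ [s (m + n)]"
  by (simp add: win_def)

lemma blocks_finite:
  assumes "\<forall>i. s i \<in> {0,1}"
  shows "finite (blocks_of s n)"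
proof -
  have "blocks_of s n \<subseteq> {xs. set xs \<subseteq> {0,1} \<and> length xs = n}"
    using assms by (force simp: blocks_win win_def)
  moreover have "finite {xs. set xs \<subseteq> {0::nat,1} \<and> length xs = n}"
    by (rule finite_lists_length_eq) simp
  ultimately show ?thesis by (rule finite_subset)
qed

lemma blocks_take: "k \<le> n \<Longrightarrow> take k ` blocks_of s n = blocks_of s k"
  by (auto simp: blocks_win take_win image_iff)

lemma blocks_mono:
  assumes "\<forall>i. s i \<in> {0,1}"
  shows "card (blocks_of s k) \<le> card (blocks_of s (Suc k))"
proof -
  have "card (take k ` blocks_of s (Suc k)) \<le> card (blocks_of s (Suc k))"
    by (rule card_image_le) (rule blocks_finite[OF assms])
  thus ?thesis using blocks_take[of k "Suc k" s] by simp
qed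

lemma blocks_zero: "blocks_of s 0 = {[]}"
  by (auto simp: blocks_win win_def)

lemma flat_step:
  assumes vals: "\<forall>i. s i \<in> {0,1}" and le: "card (blocks_of s L) \<le> L"
  shows "\<exists>k<L. inj_on (take k) (blocks_of s (Suc k))"
proof (rule ccontr)
  assume "\<not> ?thesis"
  hence ni: "\<And>k. k < L \<Longrightarrow> \<not> inj_on (take k) (blocks_of s (Suc k))" by blast
  have "k \<le> L \<Longrightarrow> card (blocks_of s k) \<ge> k + 1" for k
  proof (induction k)
    case 0 thus ?case by (simp add: blocks_zero)
  next
    case (Suc k)
    have fin: "finite (blocks_of s (Suc k))" by (rule blocks_finite[OF vals])
    have "card (take k ` blocks_of s (Suc k)) \<noteq> card (blocks_of s (Suc k))"
      using ni[of k] Suc.prems fin eq_card_imp_inj_on by fastforce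
    moreover have "card (take k ` blocks_of s (Suc k)) \<le> card (blocks_of s (Suc k))"
      using fin card_image_le by blast
    ultimately have "card (blocks_of s k) < card (blocks_of s (Suc k))"
      using blocks_take[of k "Suc k" s] by simp
    thus ?case using Suc by simp
  qed
  from this[of L] le show False by simp
qed

lemma determ:
  assumes vals: "\<forall>i. s i \<in> {0,1}" and inj: "inj_on (take k) (blocks_of s (Suc k))"
    and eq: "win s i k = win s j k"
  shows "s (i + t) = s (j + t)"
proof -
  have step: "win s a k = win s b k \<Longrightarrow> s (a + k) = s (b + k)" for a b
  proof -
    assume h: "win s a k = win s b k"
    have "win s a (Suc k) = win s b (Suc k)"
      using inj_onD[OF inj, of "win s a (Suc k)" "win s b (Suc k)"] h
      by (simp add: take_win blocks_win)
    thus ?thesis by (simp add: win_Suc)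
  qed
  have all: "win s (i+t) k = win s (j+t) k" for t
  proof (induction t)
    case 0 thus ?case using eq by simp
  next
    case (Suc t)
    have "s (i + t + k) = s (j + t + k)" using step[OF Suc] .
    moreover have "\<forall>r<k. s (i + t + r) = s (j + t + r)" using Suc by (simp add: win_eq_iff)
    ultimately have "\<forall>r<Suc k. s (i + t + r) = s (j + t + r)"
      by (metis less_antisym)
    hence "\<forall>r<k. s (i + Suc t + r) = s (j + Suc t + r)"
      by (metis Suc_less_eq add_Suc_right add_Suc_shift)
    thus ?case by (simp add: win_eq_iff)
  qed
  show ?thesis
  proof (cases "t < k")
    case True thus ?thesis using eq by (simp add: win_eq_iff)
  next
    case False
    then obtain r where "t = r + k" by (metis add.commute le_add_diff_inverse not_less)
    thus ?thesis using step[OF all[of r]] by (simp add: add.assoc)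
  qed
qed

lemma bounded_after_flat:
  assumes vals: "\<forall>i. s i \<in> {0,1}" and inj: "inj_on (take k) (blocks_of s (Suc k))"
    and kn: "k \<le> n"
  shows "card (blocks_of s n) \<le> card (blocks_of s k)"
proof -
  have "inj_on (take k) (blocks_of s n)"
  proof (rule inj_onI)
    fix x y assume "x \<in> blocks_of s n" "y \<in> blocks_of s n" "take k x = take k y"
    then obtain i j where x: "x = win s i n" and y: "y = win s j n" and "win s i k = win s j k"
      using kn by (auto simp: blocks_win take_win)
    hence "\<forall>t. s (i+t) = s (j+t)" using determ[OF vals inj] by blast
    thus "x = y" using x y by (simp add: win_eq_iff)
  qed
  moreover have "take k ` blocks_of s n \<subseteq> blocks_of s k" using blocks_take[OF kn] by simp
  ultimately show ?thesis using card_inj_on_le blocks_finite[OF vals] by blast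
qed

lemma recurrence:
  assumes st: "sturmian u"
  shows "\<exists>m'\<ge>N. win u m' L = win u m L"
proof (rule ccontr)
  assume nex: "\<not> ?thesis"
  have vals: "\<forall>i. u i \<in> {0,1}" using st by (simp add: sturmian_def)
  define s where "s = (\<lambda>i. u (N + i))"
  have svals: "\<forall>i. s i \<in> {0,1}" using vals by (simp add: s_def)
  have ws: "win s a n = win u (N + a) n" for a n by (simp add: win_def s_def add.assoc)
  have L1: "L \<ge> 1" using nex by (cases L) (auto simp: win_def)
  have sub: "blocks_of s L \<subseteq> blocks_of u L" by (auto simp: blocks_win ws)
  have notin: "win u m L \<notin> blocks_of s L"
  proof
    assume "win u m L \<in> blocks_of s L"
    then obtain a where "win u m L = win u (N + a) L" by (auto simp: blocks_win ws)
    thus False using nex le_add1[of N a] by metis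
  qed
  have "card (blocks_of s L) < card (blocks_of u L)"
    using sub notin blocks_finite[OF vals] by (metis psubsetI psubset_card_mono blocks_win rangeI)
  hence "card (blocks_of s L) \<le> L" using st L1 by (simp add: sturmian_def)
  then obtain k where kL: "k < L" and inj: "inj_on (take k) (blocks_of s (Suc k))"
    using flat_step[OF svals] by blast
  define n where "n = N + L + k + 1"
  have "blocks_of u n \<subseteq> (\<lambda>m. win u m n) ` {..<N} \<union> blocks_of s n"
  proof
    fix x assume "x \<in> blocks_of u n"
    then obtain m where x: "x = win u m n" by (auto simp: blocks_win)
    show "x \<in> (\<lambda>m. win u m n) ` {..<N} \<union> blocks_of s n"
    proof (cases "m < N")
      case True thus ?thesis using x by auto
    next
      case False
      hence "x = win s (m - N) n" using x by (simp add: ws)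
      thus ?thesis by (auto simp: blocks_win)
    qed
  qed
  hence "card (blocks_of u n) \<le> card ((\<lambda>m. win u m n) ` {..<N} \<union> blocks_of s n)"
    by (intro card_mono) (auto intro: blocks_finite[OF svals])
  also have "\<dots> \<le> card ((\<lambda>m. win u m n) ` {..<N}) + card (blocks_of s n)" by (rule card_Un_le)
  also have "\<dots> \<le> N + card (blocks_of s k)"
    using bounded_after_flat[OF svals inj, of n] card_image_le[of "{..<N}" "\<lambda>m. win u m n"]
    by (simp add: n_def)
  also have "\<dots> \<le> N + card (blocks_of s L)"
  proof -
    have "card (blocks_of s k) \<le> card (blocks_of s L)"
      using kL by (induction L) (auto intro: le_trans blocks_mono[OF svals] simp: less_Suc_eq)
    thus ?thesis by simp
  qed
  finally have "card (blocks_of u n) \<le> N + L" using \<open>card (blocks_of s L) \<le> L\<close> by simp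
  moreover have "card (blocks_of u n) = n + 1" using st by (simp add: sturmian_def n_def)
  ultimately show False by (simp add: n_def)
qed



lemma Xplus_u: "u \<in> Xplus u"
  unfolding Xplus_def by (auto intro!: exI[of _ 0])

lemma Xplus_shift: "x \<in> Xplus u \<Longrightarrow> (\<lambda>i. x (i + k)) \<in> Xplus u"
  unfolding Xplus_def
proof (clarify)
  fix n assume h: "\<forall>n. \<exists>m. \<forall>i<n. x i = u (m + i)"
  obtain m where "\<forall>i<n+k. x i = u (m + i)" using h by blast
  hence "\<forall>i<n. x (i + k) = u ((m + k) + i)" by (simp add: add.commute add.left_commute)
  thus "\<exists>m. \<forall>i<n. x (i + k) = u (m + i)" by blast
qed

lemma Xtilde_shift: "b \<in> Xtilde u \<Longrightarrow> (\<lambda>j. b (j + d)) \<in> Xtilde u"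
  unfolding Xtilde_def
proof (clarify)
  fix p assume "\<forall>p. (\<lambda>i. b (p + int i)) \<in> Xplus u"
  hence "(\<lambda>i. b ((p + d) + int i)) \<in> Xplus u" by blast
  thus "(\<lambda>i. b (p + int i + d)) \<in> Xplus u" by (simp add: ac_simps)
qed

lemma Xplus_vals:
  assumes "\<forall>i. u i \<in> {0,1}" "x \<in> Xplus u" shows "x i \<in> {0,1}"
proof -
  obtain m where "\<forall>t<Suc i. x t = u (m + t)" using assms(2) unfolding Xplus_def by blast
  hence "x i = u (m + i)" by simp
  thus ?thesis using assms(1) by simp
qed

lemma Xtilde_vals:
  assumes "\<forall>i. u i \<in> {0,1}" "b \<in> Xtilde u" shows "b j \<in> {0,1}"
proof -
  have "(\<lambda>i. b (j + int i)) \<in> Xplus u" using assms(2) unfolding Xtilde_def by blast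
  from Xplus_vals[OF assms(1) this, of 0] show ?thesis by simp
qed

definition xcons :: "nat \<Rightarrow> (nat \<Rightarrow> nat) \<Rightarrow> nat \<Rightarrow> nat" where
  "xcons c x = (\<lambda>i. if i = 0 then c else x (i - 1))"

lemma preimage:
  assumes st: "sturmian u" and x: "x \<in> Xplus u"
  shows "\<exists>c. xcons c x \<in> Xplus u"
proof -
  have vals: "\<forall>i. u i \<in> {0,1}" using st by (simp add: sturmian_def)
  have each: "\<exists>c\<in>{0,1}. \<exists>m. win u m (Suc n) = c # win x 0 n" for n
  proof -
    obtain m where m: "\<forall>i<n. x i = u (m + i)" using x unfolding Xplus_def by blast
    obtain m' where m': "m' \<ge> 1" "win u m' n = win u m n" using recurrence[OF st] by blast
    have "win u (m' - 1) (Suc n) = u (m' - 1) # win x 0 n"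
      using m m' by (auto simp: list_eq_iff_nth_eq nth_Cons win_eq_iff split: nat.split)
    thus ?thesis using vals by blast
  qed
  define P where "P c \<longleftrightarrow> (\<forall>n. \<exists>n'\<ge>n. \<exists>m. win u m (Suc n') = c # win x 0 n')" for c
  have "P 0 \<or> P 1"
  proof (rule ccontr)
    assume "\<not> (P 0 \<or> P 1)"
    then obtain n0 n1 where n0: "\<forall>n'\<ge>n0. \<forall>m. win u m (Suc n') \<noteq> 0 # win x 0 n'"
      and n1: "\<forall>n'\<ge>n1. \<forall>m. win u m (Suc n') \<noteq> 1 # win x 0 n'"
      unfolding P_def by blast
    from each[of "max n0 n1"] n0 n1 show False by auto
  qed
  then obtain c where "P c" by blast
  have "xcons c x \<in> Xplus u"
    unfolding Xplus_def
  proof (rule CollectI, rule allI)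
    fix n
    obtain n' m where "n' \<ge> n" and w: "win u m (Suc n') = c # win x 0 n'"
      using \<open>P c\<close> P_def by blast
    have "\<forall>i<n. xcons c x i = u (m + i)"
    proof (intro allI impI)
      fix i assume "i < n"
      hence "i < Suc n'" using \<open>n' \<ge> n\<close> by simp
      hence "win u m (Suc n') ! i = (c # win x 0 n') ! i" using w by simp
      thus "xcons c x i = u (m + i)" using \<open>i < Suc n'\<close>
        by (cases i) (auto simp: xcons_def)
    qed
    thus "\<exists>m. \<forall>i<n. xcons c x i = u (m + i)" by blast
  qed
  thus ?thesis by blast
qed

lemma two_sided:
  assumes st: "sturmian u"
  shows "\<exists>b\<in>Xtilde u. \<forall>j\<ge>0. b j = u (nat j)"
proof -
  define f where "f x = xcons (SOME c. xcons c x \<in> Xplus u) x" for x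
  have fX: "x \<in> Xplus u \<Longrightarrow> f x \<in> Xplus u" for x
    unfolding f_def using preimage[OF st] by (metis someI_ex)
  have fS: "f x (Suc i) = x i" for x i by (simp add: f_def xcons_def)
  define y where "y k = (f ^^ k) u" for k
  have yX: "y k \<in> Xplus u" for k by (induction k) (auto simp: y_def Xplus_u fX)
  have yS: "y (Suc k) (Suc i) = y k i" for k i by (simp add: y_def fS)
  have yD: "y (k + d) (i + d) = y k i" for k d i
    by (induction d) (auto simp: yS)
  define b where "b j = y (nat (- j)) (nat (j + int (nat (- j))))" for j
  have bk: "j + int k \<ge> 0 \<Longrightarrow> b j = y k (nat (j + int k))" for j k
  proof -
    assume h: "j + int k \<ge> 0"
    define k0 where "k0 = nat (- j)"
    have "k0 \<le> k" using h by (simp add: k0_def)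
    then obtain d where d: "k = k0 + d" using le_Suc_ex by blast
    have "nat (j + int k) = nat (j + int k0) + d" using h unfolding d k0_def by (cases "j \<le> 0") auto
    thus ?thesis by (simp add: b_def d yD k0_def)
  qed
  have "b \<in> Xtilde u"
    unfolding Xtilde_def
  proof (rule CollectI, rule allI)
    fix p :: int
    have "(\<lambda>i. b (p + int i)) = (\<lambda>i. y (nat (- p)) (i + nat (p + int (nat (- p)))))"
    proof (rule ext)
      fix i
      have "b (p + int i) = y (nat (-p)) (nat (p + int i + int (nat (-p))))" by (rule bk) auto
      also have "nat (p + int i + int (nat (-p))) = i + nat (p + int (nat (- p)))"
        by (cases "p \<le> 0") auto
      finally show "b (p + int i) = y (nat (- p)) (i + nat (p + int (nat (- p))))" .
    qed
    thus "(\<lambda>i. b (p + int i)) \<in> Xplus u" using Xplus_shift[OF yX] by simp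
  qed
  moreover have "\<forall>j\<ge>0. b j = u (nat j)" using bk[of _ 0] by (simp add: y_def)
  ultimately show ?thesis by blast
qed

lemma occurs_win:
  assumes st: "sturmian u"
  shows "occurs u (win u m n)"
proof -
  obtain b where b: "b \<in> Xtilde u" "\<forall>j\<ge>0. b j = u (nat j)" using two_sided[OF st] by blast
  define b' where "b' j = b (j + (int m + int n - 1))" for j
  have "b' \<in> Xtilde u" using Xtilde_shift[OF b(1)] by (simp add: b'_def[abs_def])
  moreover have "ends_with b' (win u m n)"
    unfolding ends_with_def
  proof (intro allI impI)
    fix i assume "i < length (win u m n)"
    hence i: "i < n" by simp
    have "b' (int i - int (length (win u m n)) + 1) = b (int (m + i))"
      by (simp add: b'_def add.commute)
    also have "\<dots> = u (m + i)" using b(2) by (simp del: of_nat_add)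
    finally show "b' (int i - int (length (win u m n)) + 1) = win u m n ! i" using i by simp
  qed
  ultimately show ?thesis unfolding occurs_def by blast
qed

lemma occurs_blocks:
  assumes st: "sturmian u"
  shows "{w. length w = n \<and> occurs u w} = blocks_of u n"
proof
  show "blocks_of u n \<subseteq> {w. length w = n \<and> occurs u w}"
    using occurs_win[OF st] by (auto simp: blocks_win)
next
  show "{w. length w = n \<and> occurs u w} \<subseteq> blocks_of u n"
  proof clarify
    fix w assume len: "n = length w" and "occurs u w"
    then obtain b where b: "b \<in> Xtilde u" "ends_with b w" by (auto simp: occurs_def)
    define p where "p = 1 - int n"
    have "(\<lambda>i. b (p + int i)) \<in> Xplus u" using b(1) by (simp add: Xtilde_def)
    then obtain m where m: "\<forall>i<n. b (p + int i) = u (m + i)" unfolding Xplus_def by blast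
    have "w = win u m n"
    proof (rule nth_equalityI)
      show "length w = length (win u m n)" using len by simp
      fix i assume "i < length w"
      hence "b (int i - int (length w) + 1) = w ! i" using b(2) by (simp add: ends_with_def)
      moreover have "b (int i - int (length w) + 1) = u (m + i)"
        using m \<open>i < length w\<close> len by (simp add: p_def algebra_simps)
      ultimately show "w ! i = win u m n ! i" using \<open>i < length w\<close> len by simp
    qed
    thus "w \<in> blocks_of u (length w)" using len by (auto simp: blocks_win)
  qed
qed



lemma ends_with_snoc:
  "ends_with b (a @ [c]) \<longleftrightarrow> b 0 = c \<and> ends_with (\<lambda>j. b (j - 1)) a"
  unfolding ends_with_def
proof safe
  assume h: "\<forall>i<length (a @ [c]). b (int i - int (length (a @ [c])) + 1) = (a @ [c]) ! i"
  from h[rule_format, of "length a"] show "b 0 = c" by simp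
  fix i assume "i < length a"
  with h[rule_format, of i] show "b (int i - int (length a) + 1 - 1) = a ! i"
    by (simp add: nth_append algebra_simps)
next
  fix i
  assume h: "\<forall>i<length a. b (int i - int (length a) + 1 - 1) = a ! i"
    and i: "i < length (a @ [b 0])"
  show "b (int i - int (length (a @ [b 0])) + 1) = (a @ [b 0]) ! i"
  proof (cases "i < length a")
    case True thus ?thesis using h[rule_format, of i] by (simp add: nth_append algebra_simps)
  next
    case False
    hence "i = length a" using i by simp
    thus ?thesis by simp
  qed
qed

lemma ends_with_drop: "ends_with b a \<Longrightarrow> ends_with b (drop k a)"
  unfolding ends_with_def
proof (intro allI impI)
  fix i assume h: "\<forall>i<length a. b (int i - int (length a) + 1) = a ! i"
    and i: "i < length (drop k a)"
  hence "k + i < length a" by simp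
  from h[rule_format, OF this] i show "b (int i - int (length (drop k a)) + 1) = drop k a ! i"
    by (simp add: of_nat_diff algebra_simps)
qed

lemma ends_with_append: "ends_with b (a @ v) \<Longrightarrow> ends_with (\<lambda>j. b (j - int (length v))) a"
  unfolding ends_with_def
proof (intro allI impI)
  fix i assume h: "\<forall>i<length (a @ v). b (int i - int (length (a @ v)) + 1) = (a @ v) ! i"
    and i: "i < length a"
  from h[rule_format, of i] i show "b (int i - int (length a) + 1 - int (length v)) = a ! i"
    by (simp add: nth_append algebra_simps)
qed

lemma occurs_prefix: "occurs u (a @ v) \<Longrightarrow> occurs u a"
  unfolding occurs_def using ends_with_append Xtilde_shift[where d = "- int (length v)"]
  by fastforce

lemma occurs_drop: "occurs u a \<Longrightarrow> occurs u (drop k a)"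
  unfolding occurs_def using ends_with_drop by blast

lemma fol_drop: "fol u a \<subseteq> fol u (drop k a)"
  unfolding fol_def using ends_with_drop by blast

lemma occurs_fol: "occurs u a \<longleftrightarrow> fol u a \<noteq> {}"
  unfolding occurs_def fol_def by auto

lemma fol_snoc_iff:
  "x \<in> fol u (a @ [c]) \<longleftrightarrow> (\<exists>y\<in>fol u a. y 1 = c \<and> x = (\<lambda>i. y (Suc i)))"
proof
  assume "x \<in> fol u (a @ [c])"
  then obtain b where b: "b \<in> Xtilde u" "ends_with b (a @ [c])" and x: "x = (\<lambda>i. b (int i))"
    unfolding fol_def by blast
  define b' where "b' j = b (j - 1)" for j
  have "b' \<in> Xtilde u" using Xtilde_shift[OF b(1), of "-1"] by (simp add: b'_def[abs_def])
  moreover have "ends_with b' a" using b(2) ends_with_snoc by (simp add: b'_def[abs_def])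
  ultimately have "(\<lambda>i. b' (int i)) \<in> fol u a" unfolding fol_def by blast
  moreover have "b' (int 1) = c" using b(2) ends_with_snoc by (simp add: b'_def)
  moreover have "x = (\<lambda>i. b' (int (Suc i)))" by (simp add: x b'_def)
  ultimately show "\<exists>y\<in>fol u a. y 1 = c \<and> x = (\<lambda>i. y (Suc i))" by fastforce
next
  assume "\<exists>y\<in>fol u a. y 1 = c \<and> x = (\<lambda>i. y (Suc i))"
  then obtain b' where b': "b' \<in> Xtilde u" "ends_with b' a" "b' 1 = c"
    and x: "x = (\<lambda>i. b' (int (Suc i)))"
    unfolding fol_def by auto
  define b where "b j = b' (j + 1)" for j
  have "b \<in> Xtilde u" using Xtilde_shift[OF b'(1), of 1] by (simp add: b_def[abs_def])
  moreover have "(\<lambda>j. b (j - 1)) = b'" by (simp add: b_def)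
  hence "ends_with b (a @ [c])" using b' ends_with_snoc by (simp add: b_def)
  moreover have "x = (\<lambda>i. b (int i))" by (simp add: x b_def add.commute)
  ultimately show "x \<in> fol u (a @ [c])" unfolding fol_def by blast
qed

lemma fol_snoc_cong: "fol u a = fol u a' \<Longrightarrow> fol u (a @ [c]) = fol u (a' @ [c])"
  by (auto simp: fol_snoc_iff)

lemma occurs_snoc: "occurs u (a @ [c]) \<longleftrightarrow> (\<exists>y\<in>fol u a. y 1 = c)"
proof -
  have "fol u (a @ [c]) \<noteq> {} \<longleftrightarrow> (\<exists>y\<in>fol u a. y 1 = c)"
  proof
    assume "fol u (a @ [c]) \<noteq> {}"
    then obtain x where "x \<in> fol u (a @ [c])" by blast
    thus "\<exists>y\<in>fol u a. y 1 = c" using fol_snoc_iff by blast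
  next
    assume "\<exists>y\<in>fol u a. y 1 = c"
    then obtain y where "y \<in> fol u a" "y 1 = c" by blast
    hence "(\<lambda>i. y (Suc i)) \<in> fol u (a @ [c])" using fol_snoc_iff by blast
    thus "fol u (a @ [c]) \<noteq> {}" by blast
  qed
  thus ?thesis by (simp add: occurs_fol)
qed



definition sidx :: "(nat \<Rightarrow> nat) \<Rightarrow> nat list \<Rightarrow> nat" where
  "sidx u a = (LEAST k. k < length a \<and> significant u (drop k a))"

lemma sig_sidx: "sig u a = drop (sidx u a) a"
  by (simp add: sig_def sidx_def)

lemma occurs_last_vals:
  assumes vals: "\<forall>i. u i \<in> {0,1}" and oc: "occurs u a" and ne: "a \<noteq> []"
  shows "last a \<in> {0,1}"
proof -
  obtain b where b: "b \<in> Xtilde u" "ends_with b a" using oc by (auto simp: occurs_def)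
  have "b (int (length a - 1) - int (length a) + 1) = a ! (length a - 1)"
    using b(2) ne unfolding ends_with_def by simp
  moreover have "int (length a - 1) - int (length a) + 1 = 0" using ne by (cases a) auto
  ultimately have "b 0 = last a" using ne by (simp add: last_conv_nth)
  thus ?thesis using Xtilde_vals[OF vals b(1)] by metis
qed

lemma significant_single:
  assumes vals: "\<forall>i. u i \<in> {0,1}" and oc: "occurs u [x]"
  shows "significant u [x]"
  using occurs_last_vals[OF vals oc] oc by (auto simp: significant_def)

lemma sidx_props:
  assumes vals: "\<forall>i. u i \<in> {0,1}" and oc: "occurs u a" and ne: "a \<noteq> []"
  shows "sidx u a < length a" "significant u (drop (sidx u a) a)"
    "\<And>k. k < sidx u a \<Longrightarrow> \<not> significant u (drop k a)"
    "sidx u a \<le> length a - 1"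
proof -
  have "drop (length a - 1) a = [last a]" using ne
    by (metis append_butlast_last_id append_eq_conv_conj length_butlast)
  hence ex: "length a - 1 < length a \<and> significant u (drop (length a - 1) a)"
    using significant_single[OF vals] occurs_drop[OF oc, of "length a - 1"] ne by auto
  show "sidx u a < length a" "significant u (drop (sidx u a) a)"
    using LeastI[of "\<lambda>k. k < length a \<and> significant u (drop k a)", OF ex]
    by (simp_all add: sidx_def)
  show "sidx u a \<le> length a - 1" unfolding sidx_def by (rule Least_le) (rule ex)
  fix k assume "k < sidx u a"
  hence "\<not> (k < length a \<and> significant u (drop k a))"
    unfolding sidx_def by (rule not_less_Least)
  thus "\<not> significant u (drop k a)" using \<open>k < sidx u a\<close> \<open>sidx u a < length a\<close> by simp
qed

lemma fol_upto:
  assumes vals: "\<forall>i. u i \<in> {0,1}" and oc: "occurs u a" and ne: "a \<noteq> []"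
  shows "k \<le> sidx u a \<Longrightarrow> fol u (drop k a) = fol u a"
proof (induction k)
  case 0 thus ?case by simp
next
  case (Suc k)
  have k: "k < sidx u a" using Suc.prems by simp
  have ns: "\<not> significant u (drop k a)" using sidx_props(3)[OF vals oc ne k] .
  have len: "length (drop k a) \<ge> 2" using sidx_props(4)[OF vals oc ne] k by simp
  have "occurs u (drop k a)" using occurs_drop[OF oc] .
  hence "\<not> fol u (drop k a) \<subset> fol u (tl (drop k a))"
    using ns len by (auto simp: significant_def)
  moreover have "fol u (drop k a) \<subseteq> fol u (tl (drop k a))"
    using fol_drop[of u "drop k a" 1] by (simp add: drop_Suc tl_drop)
  ultimately have "fol u (drop k a) = fol u (drop (Suc k) a)"
    by (simp add: drop_Suc tl_drop)
  thus ?case using Suc k by simp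
qed

lemma sig_props:
  assumes vals: "\<forall>i. u i \<in> {0,1}" and oc: "occurs u a" and ne: "a \<noteq> []"
  shows "significant u (sig u a)" "fol u (sig u a) = fol u a" "sig u a \<noteq> []"
    "last (sig u a) = last a"
  using sidx_props[OF vals oc ne] fol_upto[OF vals oc ne, of "sidx u a"]
  by (auto simp: sig_sidx last_drop)

lemma sig_single:
  assumes vals: "\<forall>i. u i \<in> {0,1}" and oc: "occurs u [x]"
  shows "sig u [x] = [x]"
  using sidx_props(1)[OF vals oc] by (simp add: sig_sidx)

lemma sig_snoc:
  assumes vals: "\<forall>i. u i \<in> {0,1}" and oc: "occurs u a" and ne: "a \<noteq> []"
    and oc2: "occurs u (a @ [c])"
  shows "sig u (a @ [c]) = sig u (sig u a @ [c])"
proof -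
  define K where "K = sidx u a"
  define x where "x = a @ [c]"
  define K' where "K' = sidx u x"
  have KL: "K < length a" using sidx_props(1)[OF vals oc ne] by (simp add: K_def)
  have xne: "x \<noteq> []" by (simp add: x_def)
  have ocx: "occurs u x" using oc2 by (simp add: x_def)
  have nsig: "\<not> significant u (drop k x)" if "k < K" for k
  proof -
    have dk: "drop k x = drop k a @ [c]" using that KL by (simp add: x_def)
    have dne: "drop k a \<noteq> []" using that KL by simp
    have tl: "tl (drop k x) = drop (Suc k) a @ [c]" using dk dne
      by (simp add: drop_Suc tl_drop)
    have "fol u (drop k a) = fol u (drop (Suc k) a)"
      using fol_upto[OF vals oc ne, of k] fol_upto[OF vals oc ne, of "Suc k"] that
      by (simp add: K_def)
    hence "fol u (drop k x) = fol u (tl (drop k x))" using dk tl fol_snoc_cong by metis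
    moreover have l2: "length (drop k x) \<ge> 2" using dk dne by simp
    moreover have "drop k x \<noteq> [0]" "drop k x \<noteq> [1]" using l2 by (auto simp del: length_drop)
    ultimately show ?thesis unfolding significant_def by auto
  qed
  have K'L: "K' < length x" "significant u (drop K' x)"
    using sidx_props(1,2)[OF vals ocx xne] by (simp_all add: K'_def)
  have KK': "K \<le> K'" using nsig K'L(2) by (meson not_le)
  have sa: "sig u a @ [c] = drop K x" using KL by (simp add: sig_sidx K_def x_def)
  have "sidx u (drop K x) = K' - K"
    unfolding sidx_def
  proof (rule Least_equality)
    show "K' - K < length (drop K x) \<and> significant u (drop (K' - K) (drop K x))"
      using K'L KK' by simp
  next
    fix j assume "j < length (drop K x) \<and> significant u (drop j (drop K x))"
    hence "K + j < length x \<and> significant u (drop (K + j) x)" by (auto simp add: add.commute)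
    hence "K' \<le> K + j" unfolding K'_def sidx_def by (rule Least_le)
    thus "K' - K \<le> j" by simp
  qed
  hence "sig u (drop K x) = drop K' x" using KK' by (simp add: sig_sidx add.commute)
  thus ?thesis using sa by (simp add: sig_sidx K'_def x_def)
qed



definition pth :: "(nat \<Rightarrow> nat) \<Rightarrow> nat list \<Rightarrow> nat list list" where
  "pth u w = map (\<lambda>i. sig u (take (Suc i) w)) [0..<length w]"

lemma occurs_take: "occurs u w \<Longrightarrow> occurs u (take k w)"
  using occurs_prefix[of u "take k w" "drop k w"] by simp

lemma pth_in:
  assumes vals: "\<forall>i. u i \<in> {0,1}" and oc: "occurs u w" and len: "length w = n" and n: "n \<ge> 1"
  shows "hb_path u (pth u w) \<and> length (pth u w) = n \<and> hd (pth u w) \<in> {[0], [1]}"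
proof -
  have ocv: "occurs u (take (Suc i) w)" for i using occurs_take[OF oc] .
  have nev: "i < n \<Longrightarrow> take (Suc i) w \<noteq> []" for i using len by auto
  have sigv: "i < n \<Longrightarrow> significant u (sig u (take (Suc i) w))" for i
    using sig_props(1)[OF vals ocv nev] .
  have arrow: "hb_arrow u (sig u (take (Suc i) w)) (sig u (take (Suc (Suc i)) w))"
    if si: "Suc i < n" for i
  proof -
    define v where "v = take (Suc i) w"
    define c where "c = w ! Suc i"
    have vc: "take (Suc (Suc i)) w = v @ [c]" using si len
      by (simp add: v_def c_def take_Suc_conv_app_nth)
    have vne: "v \<noteq> []" using nev si by (simp add: v_def)
    have ocv': "occurs u v" using ocv by (simp add: v_def)
    have ocvc: "occurs u (v @ [c])" using ocv[of "Suc i"] vc by simp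
    have "sig u v @ [c] = drop (sidx u v) (v @ [c])"
      using sidx_props(1)[OF vals ocv' vne] by (simp add: sig_sidx)
    hence "occurs u (sig u v @ [c])" using occurs_drop[OF ocvc] by simp
    moreover have "sig u (v @ [c]) = sig u (sig u v @ [c])"
      by (rule sig_snoc[OF vals ocv' vne ocvc])
    ultimately show ?thesis unfolding hb_arrow_def using sigv[of i] sigv[of "Suc i"] si vc
      by (auto simp: v_def)
  qed
  have "hb_path u (pth u w)"
    unfolding hb_path_def
  proof (intro conjI allI impI ballI)
    show "pth u w \<noteq> []" using len n by (simp add: pth_def)
  next
    fix v assume "v \<in> set (pth u w)"
    then obtain i where "i < n" "v = sig u (take (Suc i) w)" using len by (auto simp: pth_def)
    thus "significant u v" using sigv by simp
  next
    fix i assume "Suc i < length (pth u w)"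
    hence "Suc i < n" using len by (simp add: pth_def)
    thus "hb_arrow u (pth u w ! i) (pth u w ! Suc i)" using arrow len
      by (simp add: pth_def del: upt_Suc)
  qed
  moreover have "length (pth u w) = n" using len by (simp add: pth_def)
  moreover have "hd (pth u w) \<in> {[0], [1]}"
  proof -
    have w0: "take 1 w = [w ! 0]" using len n by (cases w) auto
    have "occurs u [w ! 0]" using ocv[of 0] w0 by simp
    hence "hd (pth u w) = [w ! 0]" using sig_single[OF vals] w0 len n
      by (simp add: pth_def hd_map upt_conv_Cons del: upt_Suc)
    moreover have "w ! 0 \<in> {0,1}" using occurs_last_vals[OF vals \<open>occurs u [w ! 0]\<close>] by simp
    ultimately show ?thesis by auto
  qed
  ultimately show ?thesis by blast
qed

lemma pth_last:
  assumes vals: "\<forall>i. u i \<in> {0,1}" and oc: "occurs u w"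
  shows "map last (pth u w) = w"
proof (rule nth_equalityI)
  show "length (map last (pth u w)) = length w" by (simp add: pth_def)
  fix i assume "i < length (map last (pth u w))"
  hence i: "i < length w" by (simp add: pth_def)
  have "last (sig u (take (Suc i) w)) = last (take (Suc i) w)"
  proof -
    have "w \<noteq> []" using i by auto
    thus ?thesis using sig_props(4)[OF vals occurs_take[OF oc], of "Suc i"] by simp
  qed
  also have "\<dots> = w ! i" using i by (simp add: take_Suc_conv_app_nth)
  finally show "map last (pth u w) ! i = w ! i" using i by (simp add: pth_def)
qed

lemma path_is_pth:
  assumes vals: "\<forall>i. u i \<in> {0,1}" and hp: "hb_path u p" and hd: "hd p \<in> {[0], [1]}"
  shows "occurs u (map last p) \<and> p = pth u (map last p)"
proof -
  define w where "w = map last p"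
  have pne: "p \<noteq> []" using hp by (simp add: hb_path_def)
  have sigp: "i < length p \<Longrightarrow> significant u (p ! i)" for i
    using hp by (auto simp: hb_path_def)
  have claim: "i < length p \<Longrightarrow> occurs u (take (Suc i) w) \<and> p ! i = sig u (take (Suc i) w)" for i
  proof (induction i)
    case 0
    have p0: "p ! 0 = hd p" using pne by (simp add: hd_conv_nth)
    hence single: "p ! 0 = [last (p ! 0)]" using hd by auto
    have tk: "take 1 w = [last (p ! 0)]" using pne by (cases p) (auto simp: w_def)
    have "occurs u (p ! 0)" using sigp[OF 0] by (simp add: significant_def)
    thus ?case using tk single sig_single[OF vals] by (metis One_nat_def)
  next
    case (Suc i)
    define v where "v = take (Suc i) w"
    have IH: "occurs u v" "p ! i = sig u v" using Suc by (simp_all add: v_def)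
    have vne: "v \<noteq> []" using Suc.prems pne by (simp add: v_def w_def)
    obtain c where c: "occurs u (p ! i @ [c])" "p ! Suc i = sig u (p ! i @ [c])"
      using hp Suc.prems by (auto simp: hb_path_def hb_arrow_def)
    have "fol u (sig u v) = fol u v" using sig_props(2)[OF vals IH(1) vne] .
    hence ocvc: "occurs u (v @ [c])" using c(1) IH(2) by (simp add: occurs_snoc)
    have eq: "p ! Suc i = sig u (v @ [c])"
      using c(2) IH(2) sig_snoc[OF vals IH(1) vne ocvc] by simp
    have "last (p ! Suc i) = c" using eq sig_props(4)[OF vals ocvc] by simp
    hence "w ! Suc i = c" using Suc.prems by (simp add: w_def)
    hence "take (Suc (Suc i)) w = v @ [c]" using Suc.prems
      by (simp add: v_def w_def take_Suc_conv_app_nth)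
    thus ?case using ocvc eq by simp
  qed
  have "occurs u w"
    using claim[of "length p - 1"] pne by (simp add: w_def)
  moreover have "p = pth u w"
  proof (rule nth_equalityI)
    show "length p = length (pth u w)" by (simp add: pth_def w_def)
    fix i assume "i < length p"
    thus "p ! i = pth u w ! i" using claim by (simp add: pth_def w_def)
  qed
  ultimately show ?thesis unfolding w_def[symmetric] by (rule conjI)
qed

theorem theorem5p10:
  fixes u :: "nat \<Rightarrow> nat" and n :: nat
  assumes "sturmian u" and "n \<ge> 1"
  shows "card {p. hb_path u p \<and> length p = n \<and> hd p \<in> {[0], [1]}} = n + 1"
proof -
  have vals: "\<forall>i. u i \<in> {0,1}" using assms(1) by (simp add: sturmian_def)
  define W where "W = {w. length w = n \<and> occurs u w}"
  have cW: "card W = n + 1"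
    using occurs_blocks[OF assms(1), of n] assms by (simp add: W_def sturmian_def)
  have S: "{p. hb_path u p \<and> length p = n \<and> hd p \<in> {[0], [1]}} = pth u ` W"
  proof
    show "pth u ` W \<subseteq> {p. hb_path u p \<and> length p = n \<and> hd p \<in> {[0], [1]}}"
      using pth_in[OF vals _ _ assms(2)] by (auto simp: W_def)
  next
    show "{p. hb_path u p \<and> length p = n \<and> hd p \<in> {[0], [1]}} \<subseteq> pth u ` W"
    proof (rule subsetI)
      fix p assume "p \<in> {p. hb_path u p \<and> length p = n \<and> hd p \<in> {[0], [1]}}"
      hence h: "hb_path u p" "length p = n" "hd p \<in> {[0], [1]}" by simp_all
      from path_is_pth[OF vals h(1) h(3)] have "map last p \<in> W" "p = pth u (map last p)"
        using h(2) by (auto simp: W_def)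
      thus "p \<in> pth u ` W" by blast
    qed
  qed
  have "inj_on (pth u) W"
  proof (rule inj_on_inverseI[where g = "map last"])
    fix w assume "w \<in> W"
    thus "map last (pth u w) = w" using pth_last[OF vals] by (simp add: W_def)
  qed
  thus ?thesis using S cW by (simp add: card_image)
qed


end
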